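(* In the setting of the context, for distinct $p,a\in C$, $\operatorname{diam}_{S_p}(\pi_p(a))\le 4\delta$. In particular Axiom (P1) holds for the data $(\{S_p\}_{p\in C},\{\pi_p\})$ with any constant $\theta\ge4\delta$.
   Context: $X$ is a $\delta$-hyperbolic geodesic metric space ($\delta>0$, every geodesic triangle $\delta$-thin). $G$ acts on $X$ by isometries and $\mathcal{C}=(C,\{G_c\})$ is a $\rho$-separated fairly rotating family with $\rho\ge20\delta$ (i.e. $C\subseteq X$ is $G$-invariant, $G_c$ fixes $c$, $G_{gc}=gG_cg^{-1}$, distinct points of $C$ are at distance $\ge\rho$, and for $c\in C$, $g\in G_c\setminus\{1\}$, $x\in C\setminus\{c\}$ some geodesic from $x$ to $gx$ meets the closed $1$-ball about $c$). Fix $2+2\delta\le R\le\frac\rho2-3\delta$. For $p\in C$, $S_p=\{x:d(x,p)=R\}$ with metric $d_{S_p}(x,y)=$ infimum of lengths of paths from $x$ to $y$ in $X\setminus B_R(p)$ (possibly $\infty$), where $B_R(p)$ is the open ball. For $a$ with $d(a,p)\ge R$, $\pi_p(a)\subseteq S_p$ is the set of points where geodesics $[p,a]$ meet $S_p$ (equivalently nearest-point projections of $a$ to $S_p$). *)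

theory Defs
  imports Complex_Main "HOL-Library.Extended_Real" "HOL-Algebra.Group"
begin

definition geodesic_seg :: "'a::metric_space \<Rightarrow> 'a \<Rightarrow> 'a set \<Rightarrow> bool" where
  "geodesic_seg x y S \<longleftrightarrow> (\<exists>\<gamma>::real \<Rightarrow> 'a. \<gamma> 0 = x \<and> \<gamma> (dist x y) = y \<and>
      (\<forall>s\<in>{0..dist x y}. \<forall>t\<in>{0..dist x y}. dist (\<gamma> s) (\<gamma> t) = \<bar>s - t\<bar>) \<and>
      S = \<gamma> ` {0..dist x y})"

definition geodesic_space :: "'a::metric_space itself \<Rightarrow> bool" where
  "geodesic_space _ \<longleftrightarrow> (\<forall>x y::'a. \<exists>S. geodesic_seg x y S)"

definition hyperbolic :: "'a::metric_space itself \<Rightarrow> real \<Rightarrow> bool" where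
  "hyperbolic _ \<delta> \<longleftrightarrow> (\<forall>(x::'a) y z A B D. geodesic_seg x y A \<and> geodesic_seg y z B \<and> geodesic_seg x z D
      \<longrightarrow> (\<forall>u\<in>A. \<exists>v\<in>B \<union> D. dist u v \<le> \<delta>))"

definition path_length :: "(real \<Rightarrow> 'a::metric_space) \<Rightarrow> ereal" where
  "path_length \<gamma> = (SUP ts \<in> {ts. sorted ts \<and> set ts \<subseteq> {0..1}}.
      ereal (\<Sum>i<length ts - 1. dist (\<gamma> (ts ! i)) (\<gamma> (ts ! Suc i))))"

text \<open>Path metric on S_p: infimum of lengths of paths from x to y avoiding the open ball B_R(p)
  (infinity if there is none).\<close>
definition dS :: "'a::metric_space \<Rightarrow> real \<Rightarrow> 'a \<Rightarrow> 'a \<Rightarrow> ereal" where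
  "dS p R x y = (INF \<gamma> \<in> {\<gamma>::real \<Rightarrow> 'a. continuous_on {0..1} \<gamma> \<and> \<gamma> 0 = x \<and> \<gamma> 1 = y \<and>
        \<gamma> ` {0..1} \<subseteq> {z. \<not> dist p z < R}}. path_length \<gamma>)"

definition proj :: "'a::metric_space \<Rightarrow> real \<Rightarrow> 'a \<Rightarrow> 'a set" where
  "proj p R a = {x. \<exists>A. geodesic_seg p a A \<and> x \<in> A \<and> dist x p = R}"

definition diamS :: "'a::metric_space \<Rightarrow> real \<Rightarrow> 'a set \<Rightarrow> ereal" where
  "diamS p R Y = (SUP x \<in> Y. SUP y \<in> Y. dS p R x y)"

end

theory Submission
  imports Defs "HOL-Analysis.Lipschitz"
begin


lemma path_length_lip:
  fixes \<gamma> :: "real \<Rightarrow> 'a::metric_space"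
  assumes L: "L \<ge> 0" and lip: "\<forall>s\<in>{0..1}. \<forall>t\<in>{0..1}. dist (\<gamma> s) (\<gamma> t) \<le> L * \<bar>s - t\<bar>"
  shows "path_length \<gamma> \<le> ereal L"
  unfolding path_length_def
proof (rule SUP_least)
  fix ts :: "real list" assume "ts \<in> {ts. sorted ts \<and> set ts \<subseteq> {0..1}}"
  hence so: "sorted ts" and st: "set ts \<subseteq> {0..1}" by auto
  define n where "n = length ts"
  show "ereal (\<Sum>i<length ts - 1. dist (\<gamma> (ts ! i)) (\<gamma> (ts ! Suc i))) \<le> ereal L"
  proof (cases "n = 0")
    case True thus ?thesis using L by (simp add: n_def)
  next
    case False
    have step: "dist (\<gamma> (ts ! i)) (\<gamma> (ts ! Suc i)) \<le> L * (ts ! Suc i - ts ! i)" if "i < n - 1" for i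
    proof -
      have i1: "Suc i < n" using that by simp
      have "ts ! i \<in> set ts" "ts ! Suc i \<in> set ts" using i1 n_def by (auto intro!: nth_mem)
      hence a: "ts ! i \<in> {0..1}" "ts ! Suc i \<in> {0..1}" using st by blast+
      have "ts ! i \<le> ts ! Suc i" using sorted_nth_mono[OF so, of i "Suc i"] i1 n_def by simp
      thus ?thesis using lip a by (metis abs_of_nonneg abs_minus_commute diff_ge_0_iff_ge)
    qed
    have "(\<Sum>i<n - 1. dist (\<gamma> (ts ! i)) (\<gamma> (ts ! Suc i))) \<le> (\<Sum>i<n - 1. L * (ts ! Suc i - ts ! i))"
      by (rule sum_mono) (use step in auto)
    also have "\<dots> = L * (ts ! (n-1) - ts ! 0)"
      by (simp add: sum_distrib_left[symmetric] sum_lessThan_telescope)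
    also have "\<dots> \<le> L * 1"
    proof -
      have "ts ! (n-1) \<in> set ts" "ts ! 0 \<in> set ts" using False n_def by (auto intro!: nth_mem)
      hence "ts ! (n-1) \<in> {0..1}" "ts ! 0 \<in> {0..1}" using st by blast+
      thus ?thesis using L by (intro mult_left_mono) auto
    qed
    finally show ?thesis by (simp add: n_def)
  qed
qed

lemma lip_join:
  fixes f :: "real \<Rightarrow> 'a::metric_space"
  assumes "\<forall>s\<in>{a..b}. \<forall>t\<in>{a..b}. dist (f s) (f t) \<le> \<bar>s-t\<bar>"
    "\<forall>s\<in>{b..c}. \<forall>t\<in>{b..c}. dist (f s) (f t) \<le> \<bar>s-t\<bar>" "a \<le> b" "b \<le> c"
  shows "\<forall>s\<in>{a..c}. \<forall>t\<in>{a..c}. dist (f s) (f t) \<le> \<bar>s-t\<bar>"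
proof (intro ballI)
  fix s t assume s: "s \<in> {a..c}" and t: "t \<in> {a..c}"
  have X: "dist (f s) (f t) \<le> \<bar>s-t\<bar>" if "s \<le> b" "b \<le> t" "s \<in> {a..c}" "t \<in> {a..c}" for s t
  proof -
    have "dist (f s) (f t) \<le> dist (f s) (f b) + dist (f b) (f t)" by (rule dist_triangle)
    also have "\<dots> \<le> \<bar>s - b\<bar> + \<bar>b - t\<bar>"
      using assms(1)[rule_format, of s b] assms(2)[rule_format, of b t] assms(3,4) that by (intro add_mono) auto
    finally show ?thesis using that by simp
  qed
  show "dist (f s) (f t) \<le> \<bar>s-t\<bar>"
  proof (cases "s \<le> b")
    case True
    show ?thesis
    proof (cases "t \<le> b")
      case True thus ?thesis using \<open>s \<le> b\<close> s t assms(1) by auto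
    next
      case False thus ?thesis using X[of s t] True s t by auto
    qed
  next
    case False
    show ?thesis
    proof (cases "t \<le> b")
      case True thus ?thesis using X[of t s] False s t by (simp add: dist_commute abs_minus_commute)
    next
      case f2: False thus ?thesis using False s t assms(2) by auto
    qed
  qed
qed

lemma geo_point:
  assumes "geodesic_seg p a A" "x \<in> A" "dist x p = R"
  obtains g where "g 0 = p" "g (dist p a) = a"
    "\<forall>s\<in>{0..dist p a}. \<forall>t\<in>{0..dist p a}. dist (g s) (g t) = \<bar>s - t\<bar>"
    "A = g ` {0..dist p a}" "x = g R" "R \<le> dist p a"
proof -
  obtain g where g: "g 0 = p" "g (dist p a) = a"
    "\<forall>s\<in>{0..dist p a}. \<forall>t\<in>{0..dist p a}. dist (g s) (g t) = \<bar>s - t\<bar>"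
    "A = g ` {0..dist p a}" using assms(1) unfolding geodesic_seg_def by blast
  then obtain s where s: "s \<in> {0..dist p a}" "x = g s" using assms(2) by auto
  have "dist (g 0) (g s) = s" using g(3) s(1) by force
  hence "s = R" using assms(3) s g(1) by (simp add: dist_commute)
  thus ?thesis using that g s by auto
qed

lemma main_est:
  fixes p a :: "'a::metric_space"
  assumes geod: "geodesic_space TYPE('a)" and hyp: "hyperbolic TYPE('a) \<delta>" and dpos: "\<delta> > 0"
    and R0: "R \<ge> 0" and far: "dist p a > R + 2 * \<delta>"
    and xin: "x \<in> proj p R a" and yin: "y \<in> proj p R a"
  shows "dS p R x y \<le> ereal (4 * \<delta>)"
proof -
  define D where "D = dist p a"
  obtain A1 where A1: "geodesic_seg p a A1" "x \<in> A1" "dist x p = R" using xin unfolding proj_def by blast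
  obtain g1 where g1: "g1 0 = p" "g1 D = a"
    "\<forall>s\<in>{0..D}. \<forall>t\<in>{0..D}. dist (g1 s) (g1 t) = \<bar>s - t\<bar>"
    "A1 = g1 ` {0..D}" "x = g1 R" using geo_point[OF A1] D_def by metis
  obtain A2 where A2: "geodesic_seg p a A2" "y \<in> A2" "dist y p = R" using yin unfolding proj_def by blast
  obtain g2 where g2: "g2 0 = p" "g2 D = a"
    "\<forall>s\<in>{0..D}. \<forall>t\<in>{0..D}. dist (g2 s) (g2 t) = \<bar>s - t\<bar>"
    "A2 = g2 ` {0..D}" "y = g2 R" using geo_point[OF A2] D_def by metis
  have d1: "dist p (g1 w) = w" if "w \<in> {0..D}" for w using g1(1,3) that by force
  have d2: "dist p (g2 w) = w" if "w \<in> {0..D}" for w using g2(1,3) that by force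
  define x' where "x' = g1 (R + \<delta>)"
  have RD: "R + \<delta> \<le> D" using far dpos D_def by simp
  have x'A: "x' \<in> A1" using g1(4) x'_def RD R0 dpos by auto
  have dpx': "dist p x' = R + \<delta>" using d1 RD R0 dpos x'_def by simp
  have aa: "geodesic_seg a a {a}" unfolding geodesic_seg_def by (rule exI[of _ "\<lambda>_. a"]) auto
  have H: "\<forall>u\<in>A1. \<exists>v\<in>{a} \<union> A2. dist u v \<le> \<delta>"
    using hyp unfolding hyperbolic_def
    apply -
    apply (drule spec[where x=p], drule spec[where x=a], drule spec[where x=a])
    apply (drule spec[where x=A1], drule spec[where x="{a}"], drule spec[where x=A2])
    using A1(1) aa A2(1) by blast
  obtain v where v: "v \<in> {a} \<union> A2" "dist x' v \<le> \<delta>"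
    using H x'A by blast
  have "v \<noteq> a"
  proof
    assume "v = a"
    hence "dist x' a \<le> \<delta>" using v by simp
    hence "dist p a \<le> R + \<delta> + \<delta>" using dist_triangle[of p a x'] dpx' by linarith
    thus False using far by simp
  qed
  then obtain u where u: "u \<in> {0..D}" "v = g2 u" using v g2(4) by auto
  have dpv: "dist p v = u" using d2 u by simp
  have uhi: "u \<le> R + 2*\<delta>" using dist_triangle[of p v x'] dpx' v dpv by linarith
  have ulo: "R \<le> u" using dist_triangle[of p x' v] dpx' v dpv by (simp add: dist_commute)
  define e where "e = dist x' v"
  obtain S where "geodesic_seg x' v S" using geod unfolding geodesic_space_def by blast
  then obtain h where h: "h 0 = x'" "h e = v" "\<forall>s\<in>{0..e}. \<forall>t\<in>{0..e}. dist (h s) (h t) = \<bar>s - t\<bar>"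
    unfolding geodesic_seg_def e_def by blast
  have e0: "e \<ge> 0" "e \<le> \<delta>" using v e_def by auto
  define L where "L = \<delta> + e + (u - R)"
  define P where "P s = (if s \<le> \<delta> then g1 (R + s) else if s \<le> \<delta> + e then h (s - \<delta>)
     else g2 (u - (s - \<delta> - e)))" for s
  have P2: "P s = h (s - \<delta>)" if "s \<in> {\<delta>..\<delta>+e}" for s
    using that h(1) x'_def by (auto simp: P_def)
  have P3: "P s = g2 (u - (s - \<delta> - e))" if "s \<in> {\<delta>+e..L}" for s
  proof (cases "s \<le> \<delta>")
    case True
    hence "s = \<delta>" "e = 0" using that e0 by auto
    thus ?thesis using x'_def u h e_def by (simp add: P_def)
  next
    case False
    thus ?thesis using that h(2) u by (auto simp: P_def)
  qed
  have lip1: "\<forall>s\<in>{0..\<delta>}. \<forall>t\<in>{0..\<delta>}. dist (P s) (P t) \<le> \<bar>s-t\<bar>"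
  proof (intro ballI)
    fix s t assume "s \<in> {0..\<delta>}" "t \<in> {0..\<delta>}"
    moreover have "R + s \<in> {0..D}" "R + t \<in> {0..D}" using calculation R0 RD by auto
    ultimately show "dist (P s) (P t) \<le> \<bar>s-t\<bar>" using g1(3) by (auto simp: P_def)
  qed
  have lip2: "\<forall>s\<in>{\<delta>..\<delta>+e}. \<forall>t\<in>{\<delta>..\<delta>+e}. dist (P s) (P t) \<le> \<bar>s-t\<bar>"
  proof (intro ballI)
    fix s t assume st: "s \<in> {\<delta>..\<delta>+e}" "t \<in> {\<delta>..\<delta>+e}"
    hence "s - \<delta> \<in> {0..e}" "t - \<delta> \<in> {0..e}" by auto
    thus "dist (P s) (P t) \<le> \<bar>s-t\<bar>" using h(3) P2 st by fastforce
  qed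
  have lip3: "\<forall>s\<in>{\<delta>+e..L}. \<forall>t\<in>{\<delta>+e..L}. dist (P s) (P t) \<le> \<bar>s-t\<bar>"
  proof (intro ballI)
    fix s t assume st: "s \<in> {\<delta>+e..L}" "t \<in> {\<delta>+e..L}"
    hence "u - (s - \<delta> - e) \<in> {0..D}" "u - (t - \<delta> - e) \<in> {0..D}" using u R0 by (auto simp: L_def)
    hence "dist (g2 (u - (s - \<delta> - e))) (g2 (u - (t - \<delta> - e))) = \<bar>s-t\<bar>" using g2(3) by force
    thus "dist (P s) (P t) \<le> \<bar>s-t\<bar>" using P3 st by simp
  qed
  have lipP: "\<forall>s\<in>{0..L}. \<forall>t\<in>{0..L}. dist (P s) (P t) \<le> \<bar>s-t\<bar>"
    using lip_join[OF lip_join[OF lip1 lip2] lip3] dpos e0 ulo by (simp add: L_def)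
  have avoid: "R \<le> dist p (P s)" if sL: "s \<in> {0..L}" for s
  proof -
    consider "s \<in> {0..\<delta>}" | "s \<in> {\<delta>..\<delta>+e}" | "s \<in> {\<delta>+e..L}" using sL by (cases "s \<le> \<delta>"; cases "s \<le> \<delta> + e") auto
    thus ?thesis
    proof cases
      case 1
      hence "R + s \<in> {0..D}" using R0 RD by auto
      thus ?thesis using 1 d1 by (simp add: P_def)
    next
      case 2
      hence "s - \<delta> \<in> {0..e}" by auto
      hence "dist x' (h (s - \<delta>)) = s - \<delta>" using h(3) h(1) by force
      moreover have "dist p x' \<le> dist p (h (s - \<delta>)) + dist x' (h (s - \<delta>))"
        by (metis dist_commute dist_triangle)
      ultimately show ?thesis using P2[OF 2] dpx' 2 e0 by auto
    next
      case 3
      hence "u - (s - \<delta> - e) \<in> {0..D}" "R \<le> u - (s - \<delta> - e)" using u R0 by (auto simp: L_def)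
      thus ?thesis using P3[OF 3] d2 by simp
    qed
  qed
  have L0: "L \<ge> 0" "L \<le> 4 * \<delta>" using dpos e0 ulo uhi by (auto simp: L_def)
  define \<gamma> where "\<gamma> t = P (L * t)" for t
  have lipg: "\<forall>s\<in>{0..1}. \<forall>t\<in>{0..1}. dist (\<gamma> s) (\<gamma> t) \<le> L * \<bar>s - t\<bar>"
  proof (intro ballI)
    fix s t :: real assume "s \<in> {0..1}" "t \<in> {0..1}"
    hence "L * s \<in> {0..L}" "L * t \<in> {0..L}" using L0 by (auto intro: mult_left_le)
    hence "dist (\<gamma> s) (\<gamma> t) \<le> \<bar>L * s - L * t\<bar>" using lipP \<gamma>_def by simp
    thus "dist (\<gamma> s) (\<gamma> t) \<le> L * \<bar>s - t\<bar>" using L0 by (simp add: right_diff_distrib[symmetric] abs_mult)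
  qed
  have cont: "continuous_on {0..1} \<gamma>"
  proof (rule lipschitz_on_continuous_on)
    show "L-lipschitz_on {0..1} \<gamma>"
      by (rule lipschitz_onI) (use lipg L0 in \<open>auto simp: dist_real_def\<close>)
  qed
  have g0: "\<gamma> 0 = x" using g1(5) dpos by (simp add: \<gamma>_def P_def)
  have g1': "\<gamma> 1 = y" using P3[of L] L0 g2(5) e0 ulo by (simp add: \<gamma>_def L_def)
  have img: "\<gamma> ` {0..1} \<subseteq> {z. \<not> dist p z < R}"
  proof
    fix z assume "z \<in> \<gamma> ` {0..1}"
    then obtain t where t: "t \<in> {0..1}" "z = \<gamma> t" by auto
    hence "L * t \<in> {0..L}" using L0 by (auto intro: mult_left_le)
    thus "z \<in> {z. \<not> dist p z < R}" using avoid t \<gamma>_def by force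
  qed
  have "dS p R x y \<le> path_length \<gamma>"
    unfolding dS_def by (rule INF_lower) (use cont g0 g1' img in auto)
  also have "\<dots> \<le> ereal L" by (rule path_length_lip[OF L0(1) lipg])
  also have "\<dots> \<le> ereal (4 * \<delta>)" using L0 by simp
  finally show ?thesis .
qed

theorem lemma3p3:
  fixes G :: "('g, 'b) monoid_scheme"
    and act :: "'g \<Rightarrow> 'a::metric_space \<Rightarrow> 'a"
    and C :: "'a set" and Gc :: "'a \<Rightarrow> 'g set"
    and \<delta> \<rho> R :: real
  assumes geod: "geodesic_space TYPE('a)"
    and hyp: "hyperbolic TYPE('a) \<delta>" and dpos: "\<delta> > 0"
    and grp: "group G"
    and act_one: "\<And>x. act \<one>\<^bsub>G\<^esub> x = x"
    and act_mult: "\<And>g h x. g \<in> carrier G \<Longrightarrow> h \<in> carrier G \<Longrightarrow> act (g \<otimes>\<^bsub>G\<^esub> h) x = act g (act h x)"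
    and act_isom: "\<And>g x y. g \<in> carrier G \<Longrightarrow> dist (act g x) (act g y) = dist x y"
    and C_inv: "\<And>g c. g \<in> carrier G \<Longrightarrow> c \<in> C \<Longrightarrow> act g c \<in> C"
    and Gc_sub: "\<And>c. c \<in> C \<Longrightarrow> subgroup (Gc c) G"
    and Gc_fix: "\<And>c g. c \<in> C \<Longrightarrow> g \<in> Gc c \<Longrightarrow> act g c = c"
    and Gc_conj: "\<And>g c. g \<in> carrier G \<Longrightarrow> c \<in> C \<Longrightarrow>
                   Gc (act g c) = {g \<otimes>\<^bsub>G\<^esub> h \<otimes>\<^bsub>G\<^esub> inv\<^bsub>G\<^esub> g | h. h \<in> Gc c}"
    and sep: "\<And>c c'. c \<in> C \<Longrightarrow> c' \<in> C \<Longrightarrow> c \<noteq> c' \<Longrightarrow> dist c c' \<ge> \<rho>"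
    and rot: "\<And>c g x. c \<in> C \<Longrightarrow> g \<in> Gc c - {\<one>\<^bsub>G\<^esub>} \<Longrightarrow> x \<in> C - {c} \<Longrightarrow>
                (\<exists>S. geodesic_seg x (act g x) S \<and> (\<exists>z\<in>S. dist z c \<le> 1))"
    and rho: "\<rho> \<ge> 20 * \<delta>"
    and R_lo: "2 + 2 * \<delta> \<le> R" and R_hi: "R \<le> \<rho> / 2 - 3 * \<delta>"
  shows "(\<forall>p\<in>C. \<forall>a\<in>C. p \<noteq> a \<longrightarrow> diamS p R (proj p R a) \<le> ereal (4 * \<delta>)) \<and>
         (\<forall>\<theta>. \<theta> \<ge> 4 * \<delta> \<longrightarrow> (\<forall>p\<in>C. \<forall>a\<in>C. p \<noteq> a \<longrightarrow> diamS p R (proj p R a) \<le> ereal \<theta>))"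
  proof -
  have A: "\<forall>p\<in>C. \<forall>a\<in>C. p \<noteq> a \<longrightarrow> diamS p R (proj p R a) \<le> ereal (4 * \<delta>)"
  proof (intro ballI impI)
    fix p a assume "p \<in> C" "a \<in> C" "p \<noteq> a"
    hence far: "dist p a > R + 2 * \<delta>" using sep[of p a] R_hi R_lo dpos by linarith
    have R0: "R \<ge> 0" using R_lo dpos by linarith
    show "diamS p R (proj p R a) \<le> ereal (4 * \<delta>)"
      unfolding diamS_def
      by (intro SUP_least main_est[OF geod hyp dpos R0 far])
  qed
  moreover have "\<forall>\<theta>. \<theta> \<ge> 4 * \<delta> \<longrightarrow> (\<forall>p\<in>C. \<forall>a\<in>C. p \<noteq> a \<longrightarrow> diamS p R (proj p R a) \<le> ereal \<theta>)"
    using A by (meson ereal_less_eq(3) order_trans)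
  ultimately show ?thesis by blast
qed

end
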